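(* For any integers $1\le L\le K\le n$ and any $\epsilon\in(0,1]$, there is an $\epsilon$-net $\mathscr Y(\epsilon,n,K,L)$ of $\mathcal N(n,K,L)$ in Frobenius norm whose cardinality satisfies $$\ln|\mathscr Y(\epsilon,n,K,L)|\le n\ln K+K\ln L+(K^2+2nL)\ln\Big(\frac{9nL}{\epsilon}\Big).$$
   Context: Nested Block Model class: for integers $1\le L\le K\le n$, $\mathcal N(n,K,L)$ is the set of matrices $P\in[0,1]^{n\times n}$ for which there exist a clustering function $z:\{1,\dots,n\}\to\{1,\dots,K\}$ (communities), a clustering function $c:\{1,\dots,K\}\to\{1,\dots,L\}$ (meta-communities), a matrix $B\in[0,1]^{K\times K}$ and a matrix $H\in\mathbb R_+^{n\times L}$ such that, with $n_k=\#\{i:z(i)=k\}$, $$\sum_{i:\,z(i)=k}H_{i,l}=n_k\quad\text{for all }k\le K,\ l\le L,$$ and $$P_{ij}=B_{z(i),z(j)}\,H_{i,c(z(j))}\,H_{j,c(z(i))}\quad\text{for all }i,j.$$ An $\epsilon$-net of a set $\mathcal S$ of matrices in Frobenius norm is a finite set $\mathcal Y$ such that for every $S\in\mathcal S$ there is $Y\in\mathcal Y$ with $\|S-Y\|_F\le\epsilon$. *)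

theory Defs
  imports "HOL-Analysis.Analysis"
begin

text \<open>n x n real matrices are represented as functions nat => nat => real,
  indexed by {0..<n}; entries outside the index range are irrelevant.
  Communities are {0..<K}, meta-communities are {0..<L}.\<close>

definition frob_dist :: "nat \<Rightarrow> (nat \<Rightarrow> nat \<Rightarrow> real) \<Rightarrow> (nat \<Rightarrow> nat \<Rightarrow> real) \<Rightarrow> real" where
  "frob_dist n S Y = sqrt (\<Sum>i<n. \<Sum>j<n. (S i j - Y i j)^2)"

definition nested_block_model :: "nat \<Rightarrow> nat \<Rightarrow> nat \<Rightarrow> (nat \<Rightarrow> nat \<Rightarrow> real) set" where
  "nested_block_model n K L = {P.
     (\<forall>i<n. \<forall>j<n. 0 \<le> P i j \<and> P i j \<le> 1) \<and>
     (\<exists>(z::nat\<Rightarrow>nat) (c::nat\<Rightarrow>nat) (B::nat\<Rightarrow>nat\<Rightarrow>real) (H::nat\<Rightarrow>nat\<Rightarrow>real).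
        (\<forall>i<n. z i < K) \<and> (\<forall>k<K. c k < L) \<and>
        (\<forall>k<K. \<forall>k'<K. 0 \<le> B k k' \<and> B k k' \<le> 1) \<and>
        (\<forall>i<n. \<forall>l<L. 0 \<le> H i l) \<and>
        (\<forall>k<K. \<forall>l<L. (\<Sum>i\<in>{i. i < n \<and> z i = k}. H i l) = real (card {i. i < n \<and> z i = k})) \<and>
        (\<forall>i<n. \<forall>j<n. P i j = B (z i) (z j) * H i (c (z j)) * H j (c (z i))))}"

definition is_eps_net :: "nat \<Rightarrow> real \<Rightarrow> (nat \<Rightarrow> nat \<Rightarrow> real) set \<Rightarrow> (nat \<Rightarrow> nat \<Rightarrow> real) set \<Rightarrow> bool" where
  "is_eps_net n \<epsilon> S Y \<longleftrightarrow> finite Y \<and> (\<forall>P\<in>S. \<exists>Q\<in>Y. frob_dist n P Q \<le> \<epsilon>)"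

end

theory Submission
  imports Defs
begin

lemma prod3_diff:
  fixes a b c a' b' c' d :: real
  assumes "0 \<le> a" "a \<le> 1" "0 \<le> b" "b \<le> 1" "0 \<le> c" "c \<le> 1"
    "0 \<le> a'" "a' \<le> 1" "0 \<le> b'" "b' \<le> 1" "0 \<le> c'" "c' \<le> 1"
    "\<bar>a - a'\<bar> \<le> d" "\<bar>b - b'\<bar> \<le> d" "\<bar>c - c'\<bar> \<le> d"
  shows "\<bar>a*b*c - a'*b'*c'\<bar> \<le> 3*d"
proof -
  have eq: "a*b*c - a'*b'*c' = (a-a')*(b*c) + (b-b')*(a'*c) + (c-c')*(a'*b')"
    by (simp add: algebra_simps)
  have 1: "\<bar>(a-a')*(b*c)\<bar> \<le> d"
  proof -
    have "\<bar>(a-a')*(b*c)\<bar> = \<bar>a-a'\<bar> * (b*c)" using assms by (simp add: abs_mult)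
    also have "\<dots> \<le> d * 1" using assms by (intro mult_mono) (auto simp: mult_le_one)
    finally show ?thesis by simp
  qed
  have 2: "\<bar>(b-b')*(a'*c)\<bar> \<le> d"
  proof -
    have "\<bar>(b-b')*(a'*c)\<bar> = \<bar>b-b'\<bar> * (a'*c)" using assms by (simp add: abs_mult)
    also have "\<dots> \<le> d * 1" using assms by (intro mult_mono) (auto simp: mult_le_one)
    finally show ?thesis by simp
  qed
  have 3: "\<bar>(c-c')*(a'*b')\<bar> \<le> d"
  proof -
    have "\<bar>(c-c')*(a'*b')\<bar> = \<bar>c-c'\<bar> * (a'*b')" using assms by (simp add: abs_mult)
    also have "\<dots> \<le> d * 1" using assms by (intro mult_mono) (auto simp: mult_le_one)
    finally show ?thesis by simp
  qed
  show ?thesis unfolding eq using 1 2 3 by linarith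
qed

lemma factor:
  assumes "P \<in> nested_block_model n K L"
  shows "\<exists>(z::nat\<Rightarrow>nat) (c::nat\<Rightarrow>nat) (s::nat\<times>nat\<Rightarrow>real) (x::nat\<times>nat\<Rightarrow>real).
    (\<forall>i<n. z i < K) \<and> (\<forall>k<K. c k < L) \<and>
    (\<forall>k<K. \<forall>k'<K. 0 \<le> s(k,k') \<and> s(k,k') \<le> 1) \<and>
    (\<forall>i<n. \<forall>l<L. 0 \<le> x(i,l) \<and> x(i,l) \<le> 1) \<and>
    (\<forall>i<n. \<forall>j<n. P i j = s(z i, z j) * x(i, c (z j)) * x(j, c (z i)))"
proof -
  from assms obtain z c B H where
    P01: "\<forall>i<n. \<forall>j<n. 0 \<le> P i j \<and> P i j \<le> 1" and
    zK: "\<forall>i<n. z i < K" and cL: "\<forall>k<K. c k < L" and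
    B01: "\<forall>k<K. \<forall>k'<K. 0 \<le> B k k' \<and> B k k' \<le> 1" and
    H0: "\<forall>i<n. \<forall>l<L. 0 \<le> H i l" and
    PE: "\<forall>i<n. \<forall>j<n. P i j = B (z i) (z j) * H i (c (z j)) * H j (c (z i))"
    unfolding nested_block_model_def by auto
  define Mx where "Mx k l = Max (insert 0 ((\<lambda>i. H i l) ` {i. i<n \<and> z i = k}))" for k l
  have fin: "finite (insert 0 ((\<lambda>i. H i l) ` {i. i<n \<and> z i = k}))" for k l by auto
  have Mx0: "0 \<le> Mx k l" for k l unfolding Mx_def using fin by (intro Max_ge) auto
  have HMx: "H i l \<le> Mx (z i) l" if "i < n" for i l unfolding Mx_def using fin that
    by (intro Max_ge) auto
  have Mxin: "\<exists>i<n. z i = k \<and> H i l = Mx k l" if "Mx k l \<noteq> 0" for k l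
  proof -
    have "Mx k l \<in> insert 0 ((\<lambda>i. H i l) ` {i. i<n \<and> z i = k})"
      unfolding Mx_def using fin by (intro Max_in) auto
    with that show ?thesis by auto
  qed
  define x where "x p = (if Mx (z (fst p)) (snd p) = 0 then 0 else H (fst p) (snd p) / Mx (z (fst p)) (snd p))" for p
  define s where "s p = B (fst p) (snd p) * Mx (fst p) (c (snd p)) * Mx (snd p) (c (fst p))" for p
  have "\<forall>k<K. \<forall>k'<K. 0 \<le> s(k,k') \<and> s(k,k') \<le> 1"
  proof (intro allI impI conjI)
    fix k k' assume k: "k < K" "k' < K"
    show "0 \<le> s(k,k')" unfolding s_def using B01 k Mx0 by simp
    show "s(k,k') \<le> 1"
    proof (cases "Mx k (c k') = 0 \<or> Mx k' (c k) = 0")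
      case True thus ?thesis unfolding s_def by auto
    next
      case False
      then obtain i j where ij: "i<n" "z i = k" "H i (c k') = Mx k (c k')"
        "j<n" "z j = k'" "H j (c k) = Mx k' (c k)" using Mxin by metis
      have "P i j = s(k,k')" using PE ij unfolding s_def by auto
      thus ?thesis using P01 ij(1,4) by metis
    qed
  qed
  moreover have "\<forall>i<n. \<forall>l<L. 0 \<le> x(i,l) \<and> x(i,l) \<le> 1"
  proof (intro allI impI)
    fix i l assume il: "i < n" "l < L"
    have "0 \<le> H i l" "H i l \<le> Mx (z i) l" "0 \<le> Mx (z i) l" using H0 HMx Mx0 il by auto
    thus "0 \<le> x(i,l) \<and> x(i,l) \<le> 1" unfolding x_def by (auto simp: divide_le_eq_1)
  qed
  moreover have "\<forall>i<n. \<forall>j<n. P i j = s(z i, z j) * x(i, c (z j)) * x(j, c (z i))"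
  proof (intro allI impI)
    fix i j assume ij: "i < n" "j < n"
    have l1: "c (z j) < L" "c (z i) < L" using zK cL ij by auto
    show "P i j = s(z i, z j) * x(i, c (z j)) * x(j, c (z i))"
    proof (cases "Mx (z i) (c (z j)) = 0 \<or> Mx (z j) (c (z i)) = 0")
      case True
      hence "H i (c (z j)) = 0 \<or> H j (c (z i)) = 0"
        using H0 HMx ij l1 by (metis order_antisym)
      thus ?thesis using PE ij True unfolding x_def by auto
    next
      case False
      thus ?thesis using PE ij unfolding x_def s_def by (auto simp: field_simps)
    qed
  qed
  ultimately show ?thesis using zK cL by blast
qed


theorem lemma3:
  fixes n K L :: nat and \<epsilon> :: real
  assumes "1 \<le> L" "L \<le> K" "K \<le> n" "0 < \<epsilon>" "\<epsilon> \<le> 1"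
  shows "\<exists>Y. is_eps_net n \<epsilon> (nested_block_model n K L) Y \<and>
    ln (real (card Y)) \<le> real n * ln (real K) + real K * ln (real L)
      + (real K ^ 2 + 2 * real n * real L) * ln (9 * real n * real L / \<epsilon>)"
proof -
  have n1: "1 \<le> n" "1 \<le> K" using assms by auto
  define \<delta> where "\<delta> = \<epsilon> / (3 * real n)"
  have dpos: "0 < \<delta>" using assms n1 unfolding \<delta>_def by auto
  define M where "M = nat \<lfloor>1 / \<delta>\<rfloor>"
  define G where "G = (\<lambda>m. real m * \<delta>) ` {..M}"
  define rnd where "rnd t = real (nat \<lfloor>t / \<delta>\<rfloor>) * \<delta>" for t
  have rnd: "rnd t \<in> G \<and> 0 \<le> rnd t \<and> rnd t \<le> 1 \<and> \<bar>t - rnd t\<bar> \<le> \<delta>" if "0 \<le> t" "t \<le> 1" for t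
  proof -
    have f0: "0 \<le> \<lfloor>t / \<delta>\<rfloor>" using that dpos by simp
    have eqr: "rnd t = real_of_int \<lfloor>t / \<delta>\<rfloor> * \<delta>" unfolding rnd_def using f0 by simp
    have a: "real_of_int \<lfloor>t / \<delta>\<rfloor> \<le> t / \<delta>" "t / \<delta> < real_of_int \<lfloor>t / \<delta>\<rfloor> + 1"
      by linarith+
    have b: "real_of_int \<lfloor>t / \<delta>\<rfloor> * \<delta> \<le> t" using a(1) dpos by (simp add: le_divide_eq)
    have c: "t < (real_of_int \<lfloor>t / \<delta>\<rfloor> + 1) * \<delta>" using a(2) dpos by (metis pos_divide_less_eq)
    have "nat \<lfloor>t / \<delta>\<rfloor> \<le> M" unfolding M_def
      using that dpos by (intro nat_mono floor_mono divide_right_mono) auto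
    hence "rnd t \<in> G" unfolding G_def rnd_def by auto
    moreover have "0 \<le> rnd t" using eqr f0 dpos by simp
    ultimately show ?thesis using eqr b c that by (auto simp: algebra_simps)
  qed
  define F where "F = (\<lambda>(z::nat\<Rightarrow>nat, c::nat\<Rightarrow>nat, s::nat\<times>nat\<Rightarrow>real, x::nat\<times>nat\<Rightarrow>real).
      (\<lambda>i j. s (z i, z j) * x (i, c (z j)) * x (j, c (z i))))"
  define Z where "Z = ({..<n} \<rightarrow>\<^sub>E {..<K})"
  define C where "C = ({..<K} \<rightarrow>\<^sub>E {..<L})"
  define S where "S = (({..<K} \<times> {..<K}) \<rightarrow>\<^sub>E G)"
  define X where "X = (({..<n} \<times> {..<L}) \<rightarrow>\<^sub>E G)"
  define Y where "Y = F ` (Z \<times> C \<times> S \<times> X)"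
  have finG: "finite G" unfolding G_def by simp
  have finY: "finite Y" unfolding Y_def Z_def C_def S_def X_def using finG
    by (intro finite_imageI finite_cartesian_product finite_PiE) auto
  have net: "\<forall>P\<in>nested_block_model n K L. \<exists>Q\<in>Y. frob_dist n P Q \<le> \<epsilon>"
  proof
    fix P assume "P \<in> nested_block_model n K L"
    from factor[OF this] obtain z c s x where
      zK: "\<forall>i<n. z i < K" and cL: "\<forall>k<K. c k < L" and
      s01: "\<forall>k<K. \<forall>k'<K. 0 \<le> s(k,k') \<and> s(k,k') \<le> 1" and
      x01: "\<forall>i<n. \<forall>l<L. 0 \<le> x(i,l) \<and> x(i,l) \<le> 1" and
      PE: "\<forall>i<n. \<forall>j<n. P i j = s(z i, z j) * x(i, c (z j)) * x(j, c (z i))"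
      by blast
    define z0 where "z0 = restrict z {..<n}"
    define c0 where "c0 = restrict c {..<K}"
    define s0 where "s0 = restrict (\<lambda>p. rnd (s p)) ({..<K} \<times> {..<K})"
    define x0 where "x0 = restrict (\<lambda>p. rnd (x p)) ({..<n} \<times> {..<L})"
    have mem: "(z0, c0, s0, x0) \<in> Z \<times> C \<times> S \<times> X"
    proof -
      have "z0 \<in> Z" unfolding z0_def Z_def using zK by (simp add: restrict_PiE_iff)
      moreover have "c0 \<in> C" unfolding c0_def C_def using cL by (simp add: restrict_PiE_iff)
      moreover have "s0 \<in> S" unfolding s0_def S_def restrict_PiE_iff
      proof
        fix p assume "p \<in> {..<K} \<times> {..<K}"
        then obtain k k' where "p = (k,k')" "k < K" "k' < K" by auto
        thus "rnd (s p) \<in> G" using s01 rnd by blast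
      qed
      moreover have "x0 \<in> X" unfolding x0_def X_def restrict_PiE_iff
      proof
        fix p assume "p \<in> {..<n} \<times> {..<L}"
        then obtain i l where "p = (i,l)" "i < n" "l < L" by auto
        thus "rnd (x p) \<in> G" using x01 rnd by blast
      qed
      ultimately show ?thesis by blast
    qed
    define Q where "Q = F (z0, c0, s0, x0)"
    have "Q \<in> Y" unfolding Q_def Y_def using mem by blast
    have entry: "\<bar>P i j - Q i j\<bar> \<le> 3 * \<delta>" if ij: "i < n" "j < n" for i j
    proof -
      have k: "z i < K" "z j < K" using zK ij by auto
      have l: "c (z j) < L" "c (z i) < L" using cL k by auto
      have Qe: "Q i j = rnd (s(z i, z j)) * rnd (x(i, c (z j))) * rnd (x(j, c (z i)))"
        unfolding Q_def F_def z0_def c0_def s0_def x0_def using ij k l by simp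
      have A: "0 \<le> s(z i, z j)" "s(z i, z j) \<le> 1" using s01 k by auto
      have B: "0 \<le> x(i, c (z j))" "x(i, c (z j)) \<le> 1" using x01 ij l by auto
      have Cc: "0 \<le> x(j, c (z i))" "x(j, c (z i)) \<le> 1" using x01 ij l by auto
      have Pe: "P i j = s(z i,z j) * x(i,c(z j)) * x(j,c(z i))" using PE ij by blast
      have r1: "0 \<le> rnd (s(z i, z j))" "rnd (s(z i, z j)) \<le> 1" "\<bar>s(z i, z j) - rnd (s(z i, z j))\<bar> \<le> \<delta>"
        using rnd[OF A] by auto
      have r2: "0 \<le> rnd (x(i, c (z j)))" "rnd (x(i, c (z j))) \<le> 1" "\<bar>x(i, c (z j)) - rnd (x(i, c (z j)))\<bar> \<le> \<delta>"
        using rnd[OF B] by auto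
      have r3: "0 \<le> rnd (x(j, c (z i)))" "rnd (x(j, c (z i))) \<le> 1" "\<bar>x(j, c (z i)) - rnd (x(j, c (z i)))\<bar> \<le> \<delta>"
        using rnd[OF Cc] by auto
      show ?thesis unfolding Qe Pe
        by (rule prod3_diff[OF A B Cc r1(1,2) r2(1,2) r3(1,2) r1(3) r2(3) r3(3)])
    qed
    have "(\<Sum>i<n. \<Sum>j<n. (P i j - Q i j)^2) \<le> (\<Sum>i<n. \<Sum>j<n. (3*\<delta>)^2)"
    proof (intro sum_mono)
      fix i j assume "i \<in> {..<n}" "j \<in> {..<n}"
      hence e1: "\<bar>P i j - Q i j\<bar> \<le> 3 * \<delta>" using entry by auto
      show "(P i j - Q i j)^2 \<le> (3*\<delta>)^2"
        using power_mono[OF e1 abs_ge_zero, of 2] by simp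
    qed
    also have "\<dots> = (3 * \<delta> * real n)^2" by (simp add: power2_eq_square algebra_simps)
    also have "3 * \<delta> * real n = \<epsilon>" unfolding \<delta>_def using n1 by simp
    finally have "frob_dist n P Q \<le> sqrt (\<epsilon>^2)" unfolding frob_dist_def
      by (rule real_sqrt_le_mono)
    hence "frob_dist n P Q \<le> \<epsilon>" using assms by simp
    with \<open>Q \<in> Y\<close> show "\<exists>Q\<in>Y. frob_dist n P Q \<le> \<epsilon>" by blast
  qed
  define g where "g = card G"
  have "0 \<in> G" unfolding G_def by (rule image_eqI[of _ _ 0]) auto
  hence "card G \<noteq> 0" using finG by auto
  hence g1: "1 \<le> g" unfolding g_def by linarith
  have gM: "g \<le> M + 1" unfolding g_def G_def
    using card_image_le[of "{..M}" "\<lambda>m. real m * \<delta>"] by simp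
  have fl0: "0 \<le> \<lfloor>1 / \<delta>\<rfloor>" using dpos by simp
  have "real M = real_of_int \<lfloor>1 / \<delta>\<rfloor>" unfolding M_def using fl0 by simp
  hence Mle: "real M \<le> 1 / \<delta>" by (metis of_int_floor_le)
  have "1 / \<delta> = 3 * real n / \<epsilon>" unfolding \<delta>_def by simp
  have big: "3 * real n / \<epsilon> \<ge> 3" using assms n1 by (simp add: le_divide_eq)
  have "real g \<le> 3 * real n / \<epsilon> + 1" using gM Mle \<open>1 / \<delta> = _\<close> by linarith
  also have "\<dots> \<le> 3 * (3 * real n / \<epsilon>)" using big by linarith
  also have "\<dots> \<le> 9 * real n * real L / \<epsilon>" using assms n1
    by (simp add: divide_right_mono)
  finally have gle: "real g \<le> 9 * real n * real L / \<epsilon>" .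
  have g1r: "1 \<le> real g" using g1 by simp
  have lnpos: "0 \<le> ln (9 * real n * real L / \<epsilon>)" using gle g1r by (intro ln_ge_zero) linarith
  have lng: "ln (real g) \<le> ln (9 * real n * real L / \<epsilon>)" using gle g1r by (intro ln_mono) auto
  have cardP: "card (Z \<times> C \<times> S \<times> X) = K^n * L^K * g^(K*K) * g^(n*L)"
    unfolding Z_def C_def S_def X_def g_def
    by (simp add: card_cartesian_product card_PiE)
  have cY: "card Y \<le> K^n * L^K * g^(K*K) * g^(n*L)"
    unfolding Y_def cardP[symmetric] by (rule card_image_le) (unfold Z_def C_def S_def X_def, intro finite_cartesian_product finite_PiE, auto simp: finG)
  have lnY: "ln (real (card Y)) \<le> ln (real (K^n * L^K * g^(K*K) * g^(n*L)))"
  proof (cases "card Y = 0")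
    case True
    have "0 < K^n * L^K * g^(K*K) * g^(n*L)" using n1 assms g1 by simp
    hence "1 \<le> real (K^n * L^K * g^(K*K) * g^(n*L))" by linarith
    hence "0 \<le> ln (real (K^n * L^K * g^(K*K) * g^(n*L)))" by (rule ln_ge_zero)
    thus ?thesis using True by simp
  next
    case False
    hence "0 < real (card Y)" by simp
    moreover have "real (card Y) \<le> real (K^n * L^K * g^(K*K) * g^(n*L))" using cY by (rule of_nat_mono)
    ultimately show ?thesis using ln_le_cancel_iff by (metis ln_mono)
  qed
  also have "\<dots> = real n * ln (real K) + real K * ln (real L)
      + (real K * real K + real n * real L) * ln (real g)"
    using n1 assms g1 by (simp add: ln_mult ln_realpow algebra_simps)
  also have "\<dots> \<le> real n * ln (real K) + real K * ln (real L)
      + (real K ^ 2 + 2 * real n * real L) * ln (9 * real n * real L / \<epsilon>)"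
  proof -
    have "(real K * real K + real n * real L) * ln (real g)
        \<le> (real K * real K + real n * real L) * ln (9 * real n * real L / \<epsilon>)"
      using lng by (intro mult_left_mono) auto
    also have "\<dots> \<le> (real K ^ 2 + 2 * real n * real L) * ln (9 * real n * real L / \<epsilon>)"
      using lnpos by (intro mult_right_mono) (auto simp: power2_eq_square)
    finally show ?thesis by linarith
  qed
  finally show ?thesis using finY net unfolding is_eps_net_def by blast
qed

end
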